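(* Let $\mathbf{X}\subseteq\mathbb{R}_+^n$ be an interval and let $\mathrm{IC}(\mathbf{a}_0,\dots,\mathbf{a}_{n-1})$ be an interval circulant matrix containing $\hat A$. Then $\mathrm{IC}(\mathbf{a}_0,\dots,\mathbf{a}_{n-1})$ is possibly $\mathbf{X}$-robust, i.e. there exists $A\in\mathrm{IC}(\mathbf{a}_0,\dots,\mathbf{a}_{n-1})$ with $x\in\mathrm{Attr}(A)$ for all $x\in\mathbf{X}$, if and only if $x^{(i)}\in\mathrm{Attr}(\hat A)$ for all $i\in\{1,\dots,n\}$.
   Context: Max algebra on $\mathbb{R}_+$: $\oplus=\max$, ordinary product, $A^t$ max-algebraic power; $\lambda(A)$ greatest max-algebraic eigenvalue (maximum cycle geometric mean); $\mathrm{Attr}(A)=\{x\in\mathbb{R}_+^n: A^{t+1}\otimes x=\lambda(A)A^t\otimes x\text{ for some } t\ge0\}$. An interval $\mathbf{X}=\prod_i\mathbf{X}_i$ has each $\mathbf{X}_i\subseteq\mathbb{R}_+$ nonempty of one of the forms $[\underline{x}_i,\overline{x}_i]$, $(\underline{x}_i,\overline{x}_i)$, $(\underline{x}_i,\overline{x}_i]$, $[\underline{x}_i,\overline{x}_i)$; $x^{(k)}=(\underline{x}_1,\dots,\underline{x}_{k-1},\overline{x}_k,\underline{x}_{k+1},\dots,\underline{x}_n)$. $\mathrm{Circ}(a_0,\dots,a_{n-1})$ has entries $A_{i,j}=a_t$, $t\equiv j-i\pmod n$, $t\in\{0,..,n-1\}$; the interval circulant matrix $\mathrm{IC}(\mathbf{a}_0,\dots,\mathbf{a}_{n-1})$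 is the set of all $\mathrm{Circ}(a_0,\dots,a_{n-1})$ with $a_t\in\mathbf{a}_t$, each $\mathbf{a}_t\subseteq\mathbb{R}_+$ a nonempty interval of one of the four forms with endpoints $\underline a_t\le\overline a_t$. $\underline a=\max_k\underline a_k$, $\hat A=\mathrm{Circ}(\hat a_0,\dots,\hat a_{n-1})$ with $\hat a_i=\min\{\underline a,\overline a_i\}$. *)

theory Defs
  imports Complex_Main
begin

text \<open>Square matrices of size n are functions
  nat \<Rightarrow> nat \<Rightarrow> real, vectors are functions nat \<Rightarrow> real; only indices below n
  matter. Indices are 0-based (paper: 1..n).\<close>

definition mx_mult :: "nat \<Rightarrow> (nat \<Rightarrow> nat \<Rightarrow> real) \<Rightarrow> (nat \<Rightarrow> nat \<Rightarrow> real) \<Rightarrow> (nat \<Rightarrow> nat \<Rightarrow> real)" where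
  "mx_mult n A B = (\<lambda>i j. Max ((\<lambda>k. A i k * B k j) ` {0..<n}))"

definition mx_id :: "nat \<Rightarrow> nat \<Rightarrow> real" where
  "mx_id = (\<lambda>i j. if i = j then 1 else 0)"

fun mx_pow :: "nat \<Rightarrow> (nat \<Rightarrow> nat \<Rightarrow> real) \<Rightarrow> nat \<Rightarrow> (nat \<Rightarrow> nat \<Rightarrow> real)" where
  "mx_pow n A 0 = mx_id"
| "mx_pow n A (Suc t) = mx_mult n A (mx_pow n A t)"

definition mx_vec :: "nat \<Rightarrow> (nat \<Rightarrow> nat \<Rightarrow> real) \<Rightarrow> (nat \<Rightarrow> real) \<Rightarrow> (nat \<Rightarrow> real)" where
  "mx_vec n A x = (\<lambda>i. Max ((\<lambda>k. A i k * x k) ` {0..<n}))"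

text \<open>Greatest max-algebraic eigenvalue = maximum cycle geometric mean
  (over all closed walks of length k, 1 \<le> k \<le> n).\<close>
definition mx_lambda :: "nat \<Rightarrow> (nat \<Rightarrow> nat \<Rightarrow> real) \<Rightarrow> real" where
  "mx_lambda n A = Max {root k (\<Prod>j<k. A (c j) (c (Suc j mod k))) | k c.
      1 \<le> k \<and> k \<le> n \<and> (\<forall>j<k. c j < n)}"

definition nonneg_vec :: "nat \<Rightarrow> (nat \<Rightarrow> real) set" where
  "nonneg_vec n = {x. \<forall>i<n. 0 \<le> x i}"

definition Attr :: "nat \<Rightarrow> (nat \<Rightarrow> nat \<Rightarrow> real) \<Rightarrow> (nat \<Rightarrow> real) set" where
  "Attr n A = {x. x \<in> nonneg_vec n \<and> (\<exists>t::nat. \<forall>i<n.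
      mx_vec n (mx_pow n A (Suc t)) x i = mx_lambda n A * mx_vec n (mx_pow n A t) x i)}"

definition ivl :: "real \<Rightarrow> real \<Rightarrow> bool \<Rightarrow> bool \<Rightarrow> real set" where
  "ivl lo hi cl cr = {x. (if cl then lo \<le> x else lo < x) \<and> (if cr then x \<le> hi else x < hi)}"

definition ivl_ok :: "real \<Rightarrow> real \<Rightarrow> bool \<Rightarrow> bool \<Rightarrow> bool" where
  "ivl_ok lo hi cl cr \<longleftrightarrow> 0 \<le> lo \<and> lo \<le> hi \<and> ivl lo hi cl cr \<noteq> {}"

definition box :: "nat \<Rightarrow> (nat \<Rightarrow> real) \<Rightarrow> (nat \<Rightarrow> real) \<Rightarrow> (nat \<Rightarrow> bool) \<Rightarrow> (nat \<Rightarrow> bool) \<Rightarrow> (nat \<Rightarrow> real) set" where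
  "box n lo hi cl cr = {x. \<forall>i<n. x i \<in> ivl (lo i) (hi i) (cl i) (cr i)}"

text \<open>x^(k): upper endpoint in coordinate k, lower endpoints elsewhere.\<close>
definition xk :: "(nat \<Rightarrow> real) \<Rightarrow> (nat \<Rightarrow> real) \<Rightarrow> nat \<Rightarrow> (nat \<Rightarrow> real)" where
  "xk lo hi k = (\<lambda>i. if i = k then hi i else lo i)"

definition circ :: "nat \<Rightarrow> (nat \<Rightarrow> real) \<Rightarrow> (nat \<Rightarrow> nat \<Rightarrow> real)" where
  "circ n a = (\<lambda>i j. a ((j + n - i) mod n))"

definition IC :: "nat \<Rightarrow> (nat \<Rightarrow> real) \<Rightarrow> (nat \<Rightarrow> real) \<Rightarrow> (nat \<Rightarrow> bool) \<Rightarrow> (nat \<Rightarrow> bool) \<Rightarrow> (nat \<Rightarrow> nat \<Rightarrow> real) set" where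
  "IC n alo ahi acl acr = {circ n a | a. \<forall>t<n. a t \<in> ivl (alo t) (ahi t) (acl t) (acr t)}"

definition hatA :: "nat \<Rightarrow> (nat \<Rightarrow> real) \<Rightarrow> (nat \<Rightarrow> real) \<Rightarrow> (nat \<Rightarrow> nat \<Rightarrow> real)" where
  "hatA n alo ahi = circ n (\<lambda>i. min (Max (alo ` {0..<n})) (ahi i))"

end

theory Submission
  imports Defs
begin


lemma Max_swap:
  fixes f :: "'a \<Rightarrow> 'b \<Rightarrow> real"
  assumes "finite I" "finite J" "I \<noteq> {}" "J \<noteq> {}"
  shows "Max ((\<lambda>i. Max ((\<lambda>j. f i j) ` J)) ` I) = Max ((\<lambda>j. Max ((\<lambda>i. f i j) ` I)) ` J)"
proof (rule antisym)
  have le: "f i j \<le> Max ((\<lambda>j. Max ((\<lambda>i. f i j) ` I)) ` J)" if "i \<in> I" "j \<in> J" for i j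
  proof -
    have "f i j \<le> Max ((\<lambda>i. f i j) ` I)" using assms that by (intro Max_ge) auto
    also have "\<dots> \<le> Max ((\<lambda>j. Max ((\<lambda>i. f i j) ` I)) ` J)" using assms that by (intro Max_ge) auto
    finally show ?thesis .
  qed
  have le2: "f i j \<le> Max ((\<lambda>i. Max ((\<lambda>j. f i j) ` J)) ` I)" if "i \<in> I" "j \<in> J" for i j
  proof -
    have "f i j \<le> Max ((\<lambda>j. f i j) ` J)" using assms that by (intro Max_ge) auto
    also have "\<dots> \<le> Max ((\<lambda>i. Max ((\<lambda>j. f i j) ` J)) ` I)" using assms that by (intro Max_ge) auto
    finally show ?thesis .
  qed
  show "Max ((\<lambda>i. Max ((\<lambda>j. f i j) ` J)) ` I) \<le> Max ((\<lambda>j. Max ((\<lambda>i. f i j) ` I)) ` J)"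
    using assms le by (simp add: Max_le_iff)
  show "Max ((\<lambda>j. Max ((\<lambda>i. f i j) ` I)) ` J) \<le> Max ((\<lambda>i. Max ((\<lambda>j. f i j) ` J)) ` I)"
    using assms le2 by (simp add: Max_le_iff)
qed

lemma Max_mult_left:
  fixes g :: "'a \<Rightarrow> real"
  assumes "finite S" "S \<noteq> {}" "0 \<le> c"
  shows "c * Max (g ` S) = Max ((\<lambda>x. c * g x) ` S)"
proof -
  have "c * Max (g ` S) = Max ((*) c ` (g ` S))"
    by (rule hom_Max_commute) (use assms in \<open>auto simp: max_def mult_left_mono\<close>)
  then show ?thesis by (simp add: image_image)
qed

lemma Max_mult_right:
  fixes g :: "'a \<Rightarrow> real"
  assumes "finite S" "S \<noteq> {}" "0 \<le> c"
  shows "Max (g ` S) * c = Max ((\<lambda>x. g x * c) ` S)"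
  using Max_mult_left[OF assms, of g] by (simp add: mult.commute)

definition nnm :: "nat \<Rightarrow> (nat \<Rightarrow> nat \<Rightarrow> real) \<Rightarrow> bool" where
  "nnm n M = (\<forall>i k. k < n \<longrightarrow> 0 \<le> M i k)"

lemma mx_vec_cong:
  assumes "\<forall>k<n. y k = y' k"
  shows "mx_vec n M y i = mx_vec n M y' i"
  unfolding mx_vec_def using assms by (metis (no_types, lifting) atLeastLessThan_iff image_cong)

lemma mx_vec_nonneg:
  assumes "1 \<le> n" "nnm n M" "\<forall>k<n. 0 \<le> y k"
  shows "0 \<le> mx_vec n M y i"
proof -
  have "0 \<le> M i 0 * y 0" using assms by (simp add: nnm_def)
  also have "\<dots> \<le> mx_vec n M y i" unfolding mx_vec_def
    using assms by (intro Max_ge) auto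
  finally show ?thesis .
qed

lemma mx_vec_homog:
  assumes "1 \<le> n" "0 \<le> c"
  shows "mx_vec n M (\<lambda>k. c * y k) i = c * mx_vec n M y i"
  unfolding mx_vec_def using assms
  by (subst Max_mult_left) (auto simp: image_image mult.left_commute)

lemma mx_vec_mult:
  assumes "1 \<le> n" "nnm n A" "nnm n B" "\<forall>k<n. 0 \<le> y k"
  shows "mx_vec n (mx_mult n A B) y i = mx_vec n A (mx_vec n B y) i"
proof -
  have "mx_vec n (mx_mult n A B) y i = Max ((\<lambda>k. Max ((\<lambda>l. A i l * B l k * y k) ` {0..<n})) ` {0..<n})"
    unfolding mx_vec_def mx_mult_def using assms
    by (intro arg_cong[where f=Max] image_cong refl, subst Max_mult_right) (auto simp: image_image)
  also have "\<dots> = Max ((\<lambda>l. Max ((\<lambda>k. A i l * B l k * y k) ` {0..<n})) ` {0..<n})"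
    using assms by (intro Max_swap) auto
  also have "\<dots> = mx_vec n A (mx_vec n B y) i"
    unfolding mx_vec_def using assms
    by (intro arg_cong[where f=Max] image_cong refl, subst Max_mult_left) (auto simp: image_image nnm_def mult.assoc)
  finally show ?thesis .
qed

lemma nnm_id: "nnm n mx_id" by (simp add: nnm_def mx_id_def)

lemma nnm_mult: assumes "1 \<le> n" "nnm n A" "nnm n B" shows "nnm n (mx_mult n A B)"
  unfolding nnm_def mx_mult_def
proof (intro allI impI)
  fix i k assume "k < n"
  have "0 \<le> A i 0 * B 0 k" using assms \<open>k<n\<close> by (simp add: nnm_def)
  also have "\<dots> \<le> Max ((\<lambda>l. A i l * B l k) ` {0..<n})" using assms by (intro Max_ge) auto
  finally show "0 \<le> Max ((\<lambda>l. A i l * B l k) ` {0..<n})" .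
qed

lemma nnm_pow: assumes "1 \<le> n" "nnm n A" shows "nnm n (mx_pow n A m)"
  by (induction m) (auto simp: nnm_id intro: nnm_mult assms)

lemma V_Suc:
  assumes "1 \<le> n" "nnm n A" "\<forall>k<n. 0 \<le> y k"
  shows "mx_vec n (mx_pow n A (Suc m)) y i = mx_vec n A (mx_vec n (mx_pow n A m) y) i"
  using mx_vec_mult[OF assms(1,2) nnm_pow[OF assms(1,2)] assms(3)] by simp

lemma V_0:
  assumes "i < n" "\<forall>k<n. 0 \<le> y k"
  shows "mx_vec n (mx_pow n A 0) y i = y i"
proof -
  have "mx_vec n (mx_pow n A 0) y i = Max ((\<lambda>k. (if i = k then 1 else 0) * y k) ` {0..<n})"
    by (simp add: mx_vec_def mx_id_def)
  also have "\<dots> = y i"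
    using assms by (intro Max_eqI) auto
  finally show ?thesis .
qed



definition nna :: "nat \<Rightarrow> (nat \<Rightarrow> real) \<Rightarrow> bool" where
  "nna n a = (\<forall>t<n. 0 \<le> a t)"

lemma nnm_circ: "1 \<le> n \<Longrightarrow> nna n a \<Longrightarrow> nnm n (circ n a)"
  by (simp add: nnm_def nna_def circ_def)

lemma mod_diff1: fixes i d n :: nat assumes "i < n" "d < n" shows "((i + d) mod n + n - i) mod n = d"
proof (cases "i + d < n")
  case True
  then have "(i + d) mod n = i + d" by (rule mod_less)
  then have "(i + d) mod n + n - i = d + n" by simp
  then show ?thesis using assms by (metis mod_add_self2 mod_less)
next
  case False
  then have "(i + d) mod n = i + d - n" using assms by (simp add: mod_if)
  then have "(i + d) mod n + n - i = d" using False by simp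
  then show ?thesis using assms by (metis mod_less)
qed

lemma mod_diff2: fixes i k n :: nat assumes "i < n" "k < n" shows "(i + (k + n - i) mod n) mod n = k"
proof (cases "i \<le> k")
  case True
  have "k + n - i = (k - i) + n" using True by linarith
  then have "(k + n - i) mod n = k - i" using assms
    by (metis mod_add_self2 mod_less less_imp_diff_less)
  then show ?thesis using True assms by (metis le_add_diff_inverse mod_less)
next
  case False
  then have "(k + n - i) mod n = k + n - i" using assms by (intro mod_less) linarith
  moreover have "i + (k + n - i) = k + n" using assms by linarith
  ultimately show ?thesis using assms by (metis mod_add_self2 mod_less)
qed

abbreviation V :: "nat \<Rightarrow> (nat \<Rightarrow> real) \<Rightarrow> nat \<Rightarrow> (nat \<Rightarrow> real) \<Rightarrow> nat \<Rightarrow> real" where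
  "V n a m y \<equiv> mx_vec n (mx_pow n (circ n a) m) y"

lemma op_circ: "mx_vec n (circ n a) y i = Max ((\<lambda>k. a ((k + n - i) mod n) * y k) ` {0..<n})"
  by (simp add: mx_vec_def circ_def)

lemma op_ge:
  assumes "1 \<le> n" "i < n" "d < n"
  shows "a d * y ((i + d) mod n) \<le> mx_vec n (circ n a) y i"
proof -
  have "a d * y ((i + d) mod n) = a (((i + d) mod n + n - i) mod n) * y ((i + d) mod n)"
    using mod_diff1[OF assms(2,3)] by simp
  also have "\<dots> \<le> mx_vec n (circ n a) y i" unfolding op_circ using assms
    by (intro Max_ge) auto
  finally show ?thesis .
qed

lemma op_attained:
  assumes "1 \<le> n" "i < n"
  shows "\<exists>d<n. mx_vec n (circ n a) y i = a d * y ((i + d) mod n)"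
proof -
  have "mx_vec n (circ n a) y i \<in> (\<lambda>k. a ((k + n - i) mod n) * y k) ` {0..<n}"
    unfolding op_circ using assms by (intro Max_in) auto
  then obtain k where k: "k < n" "mx_vec n (circ n a) y i = a ((k + n - i) mod n) * y k" by auto
  show ?thesis
    by (rule exI[of _ "(k + n - i) mod n"]) (use k assms mod_diff2[OF assms(2) k(1)] in auto)
qed

lemma V_Suc_c:
  assumes "1 \<le> n" "nna n a" "\<forall>k<n. 0 \<le> y k"
  shows "V n a (Suc m) y i = mx_vec n (circ n a) (V n a m y) i"
  using V_Suc[OF assms(1) nnm_circ[OF assms(1,2)] assms(3)] .

lemma V_nonneg:
  assumes "1 \<le> n" "nna n a" "\<forall>k<n. 0 \<le> y k"
  shows "0 \<le> V n a m y i"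
  using mx_vec_nonneg[OF assms(1) nnm_pow[OF assms(1) nnm_circ[OF assms(1,2)]] assms(3)] .

lemma prod_nonneg: "nna n a \<Longrightarrow> set s \<subseteq> {..<n} \<Longrightarrow> 0 \<le> prod_list (map a s)"
  by (induction s) (auto simp: nna_def)

lemma W1:
  assumes "1 \<le> n" "nna n a" "\<forall>k<n. 0 \<le> y k"
  shows "i < n \<Longrightarrow> set s \<subseteq> {..<n} \<Longrightarrow>
    prod_list (map a s) * y ((i + sum_list s) mod n) \<le> V n a (length s) y i"
proof (induction s arbitrary: i)
  case Nil
  then show ?case using V_0[of i n y] assms by simp
next
  case (Cons d s)
  let ?i = "(i + d) mod n"
  have i': "?i < n" using assms by auto
  have "prod_list (map a (d # s)) * y ((i + sum_list (d # s)) mod n)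
      = a d * (prod_list (map a s) * y ((?i + sum_list s) mod n))"
    by (simp add: mod_add_left_eq add.assoc)
  also have "\<dots> \<le> a d * V n a (length s) y ?i"
    using Cons i' assms by (intro mult_left_mono) (auto simp: nna_def)
  also have "\<dots> \<le> mx_vec n (circ n a) (V n a (length s) y) i"
    using op_ge[OF assms(1) Cons.prems(1), of d a] Cons.prems by auto
  also have "\<dots> = V n a (length (d # s)) y i"
    using V_Suc_c[OF assms] by simp
  finally show ?case .
qed

lemma W2:
  assumes "1 \<le> n" "nna n a" "\<forall>k<n. 0 \<le> y k"
  shows "i < n \<Longrightarrow> \<exists>s. set s \<subseteq> {..<n} \<and> length s = m \<and>
    V n a m y i = prod_list (map a s) * y ((i + sum_list s) mod n)"
proof (induction m arbitrary: i)
  case 0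
  then show ?case using V_0[of i n y] assms by (intro exI[of _ "[]"]) simp
next
  case (Suc m)
  obtain d where d: "d < n" "mx_vec n (circ n a) (V n a m y) i = a d * V n a m y ((i + d) mod n)"
    using op_attained[OF assms(1) Suc.prems] by blast
  obtain s where s: "set s \<subseteq> {..<n}" "length s = m"
    "V n a m y ((i + d) mod n) = prod_list (map a s) * y (((i + d) mod n + sum_list s) mod n)"
    using Suc.IH[of "(i + d) mod n"] assms by auto
  show ?case
    by (rule exI[of _ "d # s"])
       (use d s V_Suc_c[OF assms, of m i] in \<open>simp add: mod_add_left_eq add.assoc\<close>)
qed



lemma nat_mod_eq_int: "(x::nat) mod n = y mod n \<longleftrightarrow> int n dvd int x - int y"
  by (metis of_nat_mod mod_eq_dvd_iff of_nat_eq_iff)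

lemma PH:
  fixes s :: "nat list"
  assumes "1 \<le> n" "n \<le> length s"
  shows "\<exists>u v w. s = u @ v @ w \<and> v \<noteq> [] \<and> sum_list v mod n = (length v * k0) mod n"
proof -
  define f where "f r = (int (sum_list (take r s)) - int r * int k0) mod int n" for r
  have sub: "f ` {0..n} \<subseteq> {0..<int n}" using assms by (auto simp: f_def)
  have "card (f ` {0..n}) \<le> n" using card_mono[OF _ sub] by simp
  then have "card (f ` {0..n}) < card {0..n}" by simp
  then have "\<not> inj_on f {0..n}" by (rule pigeonhole)
  then obtain a b where ab: "a \<in> {0..n}" "b \<in> {0..n}" "a \<noteq> b" "f a = f b"
    unfolding inj_on_def by blast
  obtain a b where ab: "a < b" "b \<le> n" "f a = f b"
  proof (cases "a < b")
    case True then show ?thesis using ab that by auto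
  next
    case False then show ?thesis using ab that[of b a] by auto
  qed
  define u where "u = take a s"
  define v where "v = drop a (take b s)"
  define w where "w = drop b s"
  have tb: "take b s = u @ v" unfolding u_def v_def
    using ab by (metis append_take_drop_id min.strict_order_iff take_take)
  have s: "s = u @ v @ w" using tb unfolding w_def by (metis append.assoc append_take_drop_id)
  have lv: "length v = b - a" unfolding v_def using ab assms by simp
  have "int n dvd (int (sum_list (take b s)) - int b * int k0) - (int (sum_list (take a s)) - int a * int k0)"
    using ab(3)[symmetric] unfolding f_def by (simp add: mod_eq_dvd_iff)
  also have "(int (sum_list (take b s)) - int b * int k0) - (int (sum_list (take a s)) - int a * int k0)
      = int (sum_list v) - int (length v * k0)"
    using tb lv ab unfolding u_def by (simp add: of_nat_diff algebra_simps)
  finally have "sum_list v mod n = (length v * k0) mod n" by (simp add: nat_mod_eq_int)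
  moreover have "v \<noteq> []" using lv ab by auto
  ultimately show ?thesis using s by blast
qed

lemma prod_le_pow: "nna n a \<Longrightarrow> (\<forall>t<n. a t \<le> L) \<Longrightarrow> set v \<subseteq> {..<n} \<Longrightarrow> prod_list (map a v) \<le> L ^ length v"
proof (induction v)
  case Nil then show ?case by simp
next
  case (Cons d v)
  then have "0 \<le> a d" "a d \<le> L" "0 \<le> prod_list (map a v)" using prod_nonneg by (auto simp: nna_def)
  then show ?case using Cons by (simp, meson mult_mono order_trans)
qed

lemma K_ge:
  assumes "1 \<le> n" "nna n a" "\<forall>k<n. 0 \<le> y k" "k0 < n" "i < n"
  shows "a k0 * V n a m y ((i + k0) mod n) \<le> V n a (Suc m) y i"
  using op_ge[OF assms(1,5,4), of a "V n a m y"] V_Suc_c[OF assms(1-3)] by simp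

lemma K_le:
  assumes "1 \<le> n" "nna n a" "\<forall>k<n. 0 \<le> y k" "k0 < n" "i < n"
    and L: "\<forall>t<n. a t \<le> L" "a k0 = L" and m: "n \<le> Suc m"
  shows "V n a (Suc m) y i \<le> L * V n a m y ((i + k0) mod n)"
proof -
  obtain s where s: "set s \<subseteq> {..<n}" "length s = Suc m"
    "V n a (Suc m) y i = prod_list (map a s) * y ((i + sum_list s) mod n)"
    using W2[OF assms(1-3) assms(5), where m="Suc m"] by blast
  obtain u v w where uvw: "s = u @ v @ w" "v \<noteq> []" "sum_list v mod n = (length v * k0) mod n"
    using PH[OF assms(1), of s k0] s(2) m by (metis le_SucE order.refl)
  define s' where "s' = u @ replicate (length v - 1) k0 @ w"
  have L0: "0 \<le> L" using assms(2,4) L by (auto simp: nna_def)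
  have set': "set s' \<subseteq> {..<n}" using s uvw assms(4) by (auto simp: s'_def)
  have lv1: "1 \<le> length v" using uvw(2) by (cases v) auto
  have len': "length s' = m" using s(2) uvw(1) lv1 by (simp add: s'_def)
  have pu: "0 \<le> prod_list (map a u)" "0 \<le> prod_list (map a w)"
    using prod_nonneg[OF assms(2)] s uvw by auto
  have pv: "prod_list (map a v) \<le> L ^ length v"
    using prod_le_pow[OF assms(2) L(1)] s uvw by auto
  have Lv: "L ^ length v = L * L ^ (length v - 1)" using uvw(2)
    by (cases "length v") auto
  have prod: "prod_list (map a s) \<le> L * prod_list (map a s')"
  proof -
    have "prod_list (map a s) = prod_list (map a u) * prod_list (map a v) * prod_list (map a w)"
      using uvw by simp
    also have "\<dots> \<le> prod_list (map a u) * L ^ length v * prod_list (map a w)"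
      using pu pv by (intro mult_right_mono mult_left_mono) auto
    also have "\<dots> = L * prod_list (map a s')"
      using Lv L by (simp add: s'_def prod_list_replicate)
    finally show ?thesis .
  qed
  have sum: "(i + sum_list s) mod n = ((i + k0) mod n + sum_list s') mod n"
  proof -
    let ?X = "i + sum_list u + sum_list w"
    have "(i + sum_list s) mod n = (?X + sum_list v) mod n" using uvw by (simp add: algebra_simps)
    also have "\<dots> = (?X + sum_list v mod n) mod n" by (simp add: mod_add_right_eq)
    also have "\<dots> = (?X + length v * k0) mod n" using uvw(3) by (simp add: mod_add_right_eq)
    also have "?X + length v * k0 = (i + k0) + sum_list s'"
      using Lv uvw(2) by (cases "length v") (auto simp: s'_def sum_list_replicate)
    also have "((i + k0) + sum_list s') mod n = ((i + k0) mod n + sum_list s') mod n"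
      by (simp add: mod_add_left_eq)
    finally show ?thesis .
  qed
  have y0: "0 \<le> y ((i + sum_list s) mod n)" using assms by auto
  have "V n a (Suc m) y i \<le> L * prod_list (map a s') * y ((i + sum_list s) mod n)"
    using s(3) prod y0 by (simp add: mult_right_mono)
  also have "\<dots> = L * (prod_list (map a s') * y (((i + k0) mod n + sum_list s') mod n))"
    using sum by simp
  also have "\<dots> \<le> L * V n a m y ((i + k0) mod n)"
    using W1[OF assms(1-3), where i="(i + k0) mod n" and s=s'] set' len' assms(1) L0
    by (intro mult_left_mono) auto
  finally show ?thesis .
qed

lemma K_eq:
  assumes "1 \<le> n" "nna n a" "\<forall>k<n. 0 \<le> y k" "k0 < n" "i < n"
    and L: "\<forall>t<n. a t \<le> L" "a k0 = L" and m: "n \<le> Suc m"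
  shows "V n a (Suc m) y i = L * V n a m y ((i + k0) mod n)"
  using K_le[OF assms] K_ge[OF assms(1-5), of m] L by simp



definition gen :: "nat \<Rightarrow> (nat \<Rightarrow> real) \<Rightarrow> real \<Rightarrow> nat \<Rightarrow> bool" where
  "gen n a L k0 = (nna n a \<and> (\<forall>t<n. a t \<le> L) \<and> k0 < n \<and> a k0 = L)"

definition holds :: "nat \<Rightarrow> (nat \<Rightarrow> real) \<Rightarrow> real \<Rightarrow> nat \<Rightarrow> (nat \<Rightarrow> real) \<Rightarrow> bool" where
  "holds n a L t y = (\<forall>i<n. V n a (Suc t) y i = L * V n a t y i)"

definition shinv :: "nat \<Rightarrow> nat \<Rightarrow> (nat \<Rightarrow> real) \<Rightarrow> bool" where
  "shinv n k0 z = (\<forall>i<n. z ((i + k0) mod n) = z i)"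

lemma UP1:
  assumes "1 \<le> n" "nna n a" "\<forall>k<n. 0 \<le> y k" "0 \<le> L" "holds n a L t y"
  shows "holds n a L (Suc t) y"
  unfolding holds_def
proof (intro allI impI)
  fix i assume "i < n"
  have "V n a (Suc (Suc t)) y i = mx_vec n (circ n a) (V n a (Suc t) y) i"
    by (rule V_Suc_c[OF assms(1-3)])
  also have "\<dots> = mx_vec n (circ n a) (\<lambda>k. L * V n a t y k) i"
    using assms(5) by (intro mx_vec_cong) (simp add: holds_def)
  also have "\<dots> = L * mx_vec n (circ n a) (V n a t y) i"
    by (rule mx_vec_homog[OF assms(1,4)])
  also have "\<dots> = L * V n a (Suc t) y i"
    using V_Suc_c[OF assms(1-3)] by simp
  finally show "V n a (Suc (Suc t)) y i = L * V n a (Suc t) y i" .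
qed

lemma UP:
  assumes "1 \<le> n" "nna n a" "\<forall>k<n. 0 \<le> y k" "0 \<le> L" "holds n a L t y"
  shows "holds n a L (t + d) y"
  by (induction d) (use assms UP1 in auto)

lemma holds_shinv:
  assumes "1 \<le> n" "gen n a L k0" "\<forall>k<n. 0 \<le> y k" "0 < L" "n \<le> Suc m"
  shows "holds n a L m y \<longleftrightarrow> shinv n k0 (V n a m y)"
proof -
  have K: "V n a (Suc m) y i = L * V n a m y ((i + k0) mod n)" if "i < n" for i
    using K_eq[OF assms(1) _ assms(3) _ that _ _ assms(5)] assms(2) by (auto simp: gen_def)
  show ?thesis unfolding holds_def shinv_def using K assms(4) by auto
qed

lemma shinv_desc:
  assumes "1 \<le> n" "gen n a L k0" "\<forall>k<n. 0 \<le> y k" "0 < L" "n \<le> Suc m"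
    and "shinv n k0 (V n a (Suc m) y)"
  shows "shinv n k0 (V n a m y)"
proof -
  have k0: "k0 < n" using assms(2) by (simp add: gen_def)
  have K: "V n a (Suc m) y i = L * V n a m y ((i + k0) mod n)" if "i < n" for i
    using K_eq[OF assms(1) _ assms(3) _ that _ _ assms(5)] assms(2) by (auto simp: gen_def)
  have Q: "V n a m y (((i + k0) mod n + k0) mod n) = V n a m y ((i + k0) mod n)" if "i < n" for i
  proof -
    have "L * V n a m y (((i + k0) mod n + k0) mod n) = V n a (Suc m) y ((i + k0) mod n)"
      using K[of "(i + k0) mod n"] assms(1) by simp
    also have "\<dots> = V n a (Suc m) y i" using assms(6) that by (simp add: shinv_def)
    also have "\<dots> = L * V n a m y ((i + k0) mod n)" using K that by simp
    finally show ?thesis using assms(4) by simp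
  qed
  show ?thesis unfolding shinv_def
  proof (intro allI impI)
    fix j assume j: "j < n"
    let ?i = "(j + n - k0) mod n"
    have "(?i + k0) mod n = j" using mod_diff2[OF k0 j] by (simp add: add.commute)
    then show "V n a m y ((j + k0) mod n) = V n a m y j"
      using Q[of ?i] assms(1) by simp
  qed
qed

lemma shinv_desc_many:
  assumes "1 \<le> n" "gen n a L k0" "\<forall>k<n. 0 \<le> y k" "0 < L"
  shows "shinv n k0 (V n a (n - 1 + d) y) \<Longrightarrow> shinv n k0 (V n a (n - 1) y)"
proof (induction d)
  case 0 then show ?case by simp
next
  case (Suc d)
  then show ?case using shinv_desc[OF assms, of "n - 1 + d"] by simp
qed

lemma FIX:
  assumes "1 \<le> n" "gen n a L k0" "\<forall>k<n. 0 \<le> y k" "0 < L" "holds n a L t y"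
  shows "holds n a L (n - 1) y"
proof -
  have nn: "nna n a" using assms(2) by (simp add: gen_def)
  have "holds n a L (t + (n - 1)) y" using UP[OF assms(1) nn assms(3) _ assms(5)] assms(4) by simp
  then have "shinv n k0 (V n a (n - 1 + t) y)"
    using holds_shinv[OF assms(1-4), of "t + (n - 1)"] by (simp add: add.commute)
  then have "shinv n k0 (V n a (n - 1) y)" by (rule shinv_desc_many[OF assms(1-4)])
  then show ?thesis using holds_shinv[OF assms(1-4), of "n - 1"] by simp
qed

lemma op_shift:
  assumes "1 \<le> n" "i < n" "k0 < n"
  shows "mx_vec n (circ n b) (\<lambda>k. y ((k + k0) mod n)) i = mx_vec n (circ n b) y ((i + k0) mod n)"
proof -
  have md: "((p + d) mod n + k0) mod n = ((p + k0) mod n + d) mod n" for p d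
    by (metis mod_add_left_eq add.assoc add.commute)
  have i': "(i + k0) mod n < n" using assms by simp
  show ?thesis
  proof (rule antisym)
    obtain d where d: "d < n" "mx_vec n (circ n b) (\<lambda>k. y ((k + k0) mod n)) i = b d * y (((i + d) mod n + k0) mod n)"
      using op_attained[OF assms(1,2)] by blast
    show "mx_vec n (circ n b) (\<lambda>k. y ((k + k0) mod n)) i \<le> mx_vec n (circ n b) y ((i + k0) mod n)"
      using d op_ge[OF assms(1) i' d(1), of b y] md by simp
  next
    obtain d where d: "d < n" "mx_vec n (circ n b) y ((i + k0) mod n) = b d * y (((i + k0) mod n + d) mod n)"
      using op_attained[OF assms(1) i'] by blast
    show "mx_vec n (circ n b) y ((i + k0) mod n) \<le> mx_vec n (circ n b) (\<lambda>k. y ((k + k0) mod n)) i"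
      using d op_ge[OF assms(1,2) d(1), of b "\<lambda>k. y ((k + k0) mod n)"] md by simp
  qed
qed

lemma V_shift:
  assumes "1 \<le> n" "nna n b" "\<forall>k<n. 0 \<le> y k" "k0 < n"
  shows "\<forall>i<n. V n b m (\<lambda>k. y ((k + k0) mod n)) i = V n b m y ((i + k0) mod n)"
proof (induction m)
  case 0
  have y': "\<forall>k<n. 0 \<le> y ((k + k0) mod n)" using assms by auto
  show ?case using V_0[OF _ y'] V_0[OF _ assms(3)] assms(1) by simp
next
  case (Suc m)
  have y': "\<forall>k<n. 0 \<le> y ((k + k0) mod n)" using assms by auto
  show ?case
  proof (intro allI impI)
    fix i assume i: "i < n"
    have "V n b (Suc m) (\<lambda>k. y ((k + k0) mod n)) i = mx_vec n (circ n b) (V n b m (\<lambda>k. y ((k + k0) mod n))) i"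
      by (rule V_Suc_c[OF assms(1,2) y'])
    also have "\<dots> = mx_vec n (circ n b) (\<lambda>k. V n b m y ((k + k0) mod n)) i"
      using Suc by (intro mx_vec_cong) auto
    also have "\<dots> = mx_vec n (circ n b) (V n b m y) ((i + k0) mod n)"
      by (rule op_shift[OF assms(1) i assms(4)])
    also have "\<dots> = V n b (Suc m) y ((i + k0) mod n)"
      using V_Suc_c[OF assms(1-3)] by simp
    finally show "V n b (Suc m) (\<lambda>k. y ((k + k0) mod n)) i = V n b (Suc m) y ((i + k0) mod n)" .
  qed
qed



lemma Step:
  assumes n: "1 \<le> n" and ga: "gen n a La k0" and gb: "gen n b Lb k0"
    and cmp: "\<forall>t<n. Lb * a t \<le> La * b t" and w: "\<forall>k<n. 0 \<le> w k" and i: "i < n"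
    and N: "n \<le> Suc N"
  shows "La * V n b (Suc N) w i = Lb * V n b N (mx_vec n (circ n a) w) i"
proof -
  have nna: "nna n a" "nna n b" and k0: "k0 < n" and ak0: "a k0 = La" and bk0: "b k0 = Lb"
    and ale: "\<forall>t<n. b t \<le> Lb"
    using ga gb by (auto simp: gen_def)
  have La0: "0 \<le> La" "0 \<le> Lb" using nna k0 ak0 bk0 by (auto simp: nna_def)
  let ?o = "mx_vec n (circ n a) w"
  have o0: "\<forall>k<n. 0 \<le> ?o k" using mx_vec_nonneg[OF n nnm_circ[OF n nna(1)] w] by auto
  have md: "((p + d) mod n + k0) mod n = ((p + k0) mod n + d) mod n" for p d
    by (metis mod_add_left_eq add.assoc add.commute)
  show ?thesis
  proof (rule antisym)
    let ?j = "(i + k0) mod n"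
    have j: "?j < n" using n by simp
    have K: "V n b (Suc N) w i = Lb * V n b N w ?j"
      using K_eq[OF n nna(2) w k0 i ale bk0 N] .
    obtain s where s: "set s \<subseteq> {..<n}" "length s = N"
      "V n b N w ?j = prod_list (map b s) * w ((?j + sum_list s) mod n)"
      using W2[OF n nna(2) w j, where m=N] by blast
    have ps: "0 \<le> prod_list (map b s)" using prod_nonneg[OF nna(2) s(1)] .
    have "La * w ((?j + sum_list s) mod n) \<le> ?o ((i + sum_list s) mod n)"
      using op_ge[OF n _ k0, of "(i + sum_list s) mod n" a w] n ak0 md[of i "sum_list s"] by simp
    then have "prod_list (map b s) * (La * w ((?j + sum_list s) mod n)) \<le> prod_list (map b s) * ?o ((i + sum_list s) mod n)"
      using ps by (rule mult_left_mono)
    also have "\<dots> \<le> V n b N ?o i" using W1[OF n nna(2) o0 i s(1)] s(2) by simp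
    finally have "La * V n b N w ?j \<le> V n b N ?o i" using s(3) by (simp add: algebra_simps)
    then show "La * V n b (Suc N) w i \<le> Lb * V n b N ?o i"
    proof -
      have "La * V n b (Suc N) w i = Lb * (La * V n b N w ?j)" using K by simp
      also have "\<dots> \<le> Lb * V n b N ?o i" using La0(2) \<open>La * V n b N w ?j \<le> V n b N ?o i\<close>
        by (rule mult_left_mono[rotated])
      finally show ?thesis .
    qed
  next
    obtain s where s: "set s \<subseteq> {..<n}" "length s = N"
      "V n b N ?o i = prod_list (map b s) * ?o ((i + sum_list s) mod n)"
      using W2[OF n nna(2) o0 i, where m=N] by blast
    have ps: "0 \<le> prod_list (map b s)" using prod_nonneg[OF nna(2) s(1)] .
    obtain d where d: "d < n" "?o ((i + sum_list s) mod n) = a d * w (((i + sum_list s) mod n + d) mod n)"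
      using op_attained[OF n, of "(i + sum_list s) mod n" a w] n by auto
    have wd: "0 \<le> w (((i + sum_list s) mod n + d) mod n)" using w n by simp
    have "Lb * V n b N ?o i = prod_list (map b s) * (Lb * a d) * w (((i + sum_list s) mod n + d) mod n)"
      using s(3) d(2) by (simp add: algebra_simps)
    also have "\<dots> \<le> prod_list (map b s) * (La * b d) * w (((i + sum_list s) mod n + d) mod n)"
      using cmp d(1) ps wd by (intro mult_right_mono mult_left_mono) auto
    also have "\<dots> = La * (prod_list (map b (s @ [d])) * w ((i + sum_list (s @ [d])) mod n))"
      by (simp add: algebra_simps mod_add_right_eq)
    also have "\<dots> \<le> La * V n b (Suc N) w i"
      using W1[OF n nna(2) w i, of "s @ [d]"] s d La0 by (intro mult_left_mono) auto
    finally show "Lb * V n b N ?o i \<le> La * V n b (Suc N) w i" .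
  qed
qed

lemma Dj:
  assumes n: "1 \<le> n" and ga: "gen n a La k0" and gb: "gen n b Lb k0"
    and cmp: "\<forall>t<n. Lb * a t \<le> La * b t" and y: "\<forall>k<n. 0 \<le> y k"
    and N: "n \<le> Suc N"
  shows "\<forall>i<n. Lb ^ j * V n b N (V n a j y) i = La ^ j * V n b (N + j) y i"
proof (induction j)
  case 0
  show ?case using V_0[OF _ y] by (auto intro: mx_vec_cong)
next
  case (Suc j)
  have nna: "nna n a" "nna n b" using ga gb by (auto simp: gen_def)
  have La0: "0 \<le> La" "0 \<le> Lb" using ga gb by (auto simp: gen_def nna_def)
  have vj: "\<forall>k<n. 0 \<le> V n a j y k" using V_nonneg[OF n nna(1) y] by auto
  have vbj: "\<forall>k<n. 0 \<le> V n b N (V n a j y) k" using V_nonneg[OF n nna(2) vj] by auto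
  show ?case
  proof (intro allI impI)
    fix i assume i: "i < n"
    have e1: "V n a (Suc j) y = mx_vec n (circ n a) (V n a j y)"
      using V_Suc_c[OF n nna(1) y] by auto
    have "Lb ^ Suc j * V n b N (V n a (Suc j) y) i = Lb ^ j * (Lb * V n b N (mx_vec n (circ n a) (V n a j y)) i)"
      using e1 by simp
    also have "\<dots> = Lb ^ j * (La * V n b (Suc N) (V n a j y) i)"
      using Step[OF n ga gb cmp vj i N] by simp
    also have "\<dots> = La * (Lb ^ j * mx_vec n (circ n b) (V n b N (V n a j y)) i)"
      using V_Suc_c[OF n nna(2) vj] by simp
    also have "\<dots> = La * mx_vec n (circ n b) (\<lambda>k. Lb ^ j * V n b N (V n a j y) k) i"
      using mx_vec_homog[OF n, of "Lb ^ j"] La0 by simp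
    also have "\<dots> = La * mx_vec n (circ n b) (\<lambda>k. La ^ j * V n b (N + j) y k) i"
      using Suc by (intro arg_cong[where f="\<lambda>z. La * z"] mx_vec_cong) auto
    also have "\<dots> = La ^ Suc j * mx_vec n (circ n b) (V n b (N + j) y) i"
      using mx_vec_homog[OF n, of "La ^ j"] La0 by simp
    also have "\<dots> = La ^ Suc j * V n b (N + Suc j) y i"
      using V_Suc_c[OF n nna(2) y] by simp
    finally show "Lb ^ Suc j * V n b N (V n a (Suc j) y) i = La ^ Suc j * V n b (N + Suc j) y i" .
  qed
qed

lemma Transfer:
  assumes n: "1 \<le> n" and ga: "gen n a La k0" and gb: "gen n b Lb k0"
    and cmp: "\<forall>t<n. Lb * a t \<le> La * b t" and y: "\<forall>k<n. 0 \<le> y k"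
    and pos: "0 < La" "0 < Lb" and h: "holds n a La t y"
  shows "holds n b Lb (n - 1) y"
proof -
  let ?N = "n - 1"
  have N: "n \<le> Suc ?N" by simp
  have nna: "nna n a" "nna n b" and k0: "k0 < n" using ga gb by (auto simp: gen_def)
  have "holds n a La ?N y" by (rule FIX[OF n ga y pos(1) h])
  then have sa: "shinv n k0 (V n a ?N y)" using holds_shinv[OF n ga y pos(1) N] by simp
  let ?z = "V n a ?N y"
  have z0: "\<forall>k<n. 0 \<le> ?z k" using V_nonneg[OF n nna(1) y] by auto
  have sb: "shinv n k0 (V n b ?N ?z)" unfolding shinv_def
  proof (intro allI impI)
    fix i assume i: "i < n"
    have "V n b ?N ?z ((i + k0) mod n) = V n b ?N (\<lambda>k. ?z ((k + k0) mod n)) i"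
      using V_shift[OF n nna(2) z0 k0] i by simp
    also have "\<dots> = V n b ?N ?z i"
      using sa by (intro mx_vec_cong) (simp add: shinv_def)
    finally show "V n b ?N ?z ((i + k0) mod n) = V n b ?N ?z i" .
  qed
  have D: "\<forall>i<n. Lb ^ ?N * V n b ?N ?z i = La ^ ?N * V n b (?N + ?N) y i"
    by (rule Dj[OF n ga gb cmp y N])
  have "shinv n k0 (V n b (?N + ?N) y)" unfolding shinv_def
  proof (intro allI impI)
    fix i assume i: "i < n"
    have i': "(i + k0) mod n < n" using n by simp
    have "La ^ ?N * V n b (?N + ?N) y ((i + k0) mod n) = La ^ ?N * V n b (?N + ?N) y i"
    proof -
      have "La ^ ?N * V n b (?N + ?N) y ((i + k0) mod n) = Lb ^ ?N * V n b ?N ?z ((i + k0) mod n)"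
        using D[rule_format, OF i'] by simp
      also have "\<dots> = Lb ^ ?N * V n b ?N ?z i" using sb i by (simp add: shinv_def)
      also have "\<dots> = La ^ ?N * V n b (?N + ?N) y i" using D[rule_format, OF i] by simp
      finally show ?thesis .
    qed
    then show "V n b (?N + ?N) y ((i + k0) mod n) = V n b (?N + ?N) y i" using pos by simp
  qed
  then have "holds n b Lb (?N + ?N) y" using holds_shinv[OF n gb y pos(2), of "?N + ?N"] by simp
  then show ?thesis by (rule FIX[OF n gb y pos(2)])
qed



lemma lam_circ:
  assumes n: "1 \<le> n" and nn: "nna n a"
  shows "mx_lambda n (circ n a) = Max (a ` {0..<n})"
proof -
  let ?L = "Max (a ` {0..<n})"
  have "?L \<in> a ` {0..<n}" using n by (intro Max_in) auto
  then obtain k0 where k0: "k0 < n" "a k0 = ?L" by auto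
  have aL: "a t \<le> ?L" if "t < n" for t using that by (intro Max_ge) auto
  have L0: "0 \<le> ?L" using nn k0 by (auto simp: nna_def)
  let ?f = "\<lambda>k c. root k (\<Prod>j<k. circ n a (c j) (c (Suc j mod k)))"
  let ?S = "{?f k c | k c. 1 \<le> k \<and> k \<le> n \<and> (\<forall>j<k. c j < n)}"
  have fin: "finite ?S"
  proof (rule finite_subset)
    show "?S \<subseteq> (\<lambda>(k, xs). ?f k (\<lambda>j. xs ! j)) ` ({1..n} \<times> {xs. set xs \<subseteq> {0..<n} \<and> length xs = n})"
    proof
      fix x assume "x \<in> ?S"
      then obtain k c where kc: "x = ?f k c" "1 \<le> k" "k \<le> n" "\<forall>j<k. c j < n" by blast
      define xs where "xs = map (\<lambda>j. if j < k then c j else 0) [0..<n]"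
      have md: "Suc j mod k < n" for j using kc by (meson less_le_trans mod_less_divisor less_le_trans zero_less_one le_less_trans not_less)
      have "?f k (\<lambda>j. xs ! j) = ?f k c"
        using kc md unfolding xs_def by (intro arg_cong[where f="root k"] prod.cong) auto
      moreover have "set xs \<subseteq> {0..<n}" "length xs = n" using kc n by (auto simp: xs_def)
      ultimately show "x \<in> (\<lambda>(k, xs). ?f k (\<lambda>j. xs ! j)) ` ({1..n} \<times> {xs. set xs \<subseteq> {0..<n} \<and> length xs = n})"
        using kc by (intro image_eqI[of _ _ "(k, xs)"]) auto
    qed
    show "finite ((\<lambda>(k, xs). ?f k (\<lambda>j. xs ! j)) ` ({1..n} \<times> {xs. set xs \<subseteq> {0..<n} \<and> length xs = n}))"
      using finite_lists_length_eq[OF finite_atLeastLessThan] by auto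
  qed
  have mem: "?L \<in> ?S"
  proof -
    define c where "c j = (j * k0) mod n" for j
    have e: "circ n a (c j) (c (Suc j mod n)) = ?L" if "j < n" for j
    proof -
      have "c (Suc j mod n) = (c j + k0) mod n"
        unfolding c_def by (metis mod_mult_left_eq mod_add_left_eq mult_Suc add.commute)
      then have "circ n a (c j) (c (Suc j mod n)) = a (((c j + k0) mod n + n - c j) mod n)"
        by (simp add: circ_def)
      also have "\<dots> = a k0" using mod_diff1[of "c j" n k0] k0 n by (simp add: c_def)
      finally show ?thesis using k0 by simp
    qed
    have "?f n c = ?L"
    proof -
      have "(\<Prod>j<n. circ n a (c j) (c (Suc j mod n))) = ?L ^ n" using e by simp
      then show ?thesis using n L0 by (simp add: real_root_power_cancel)
    qed
    moreover have "\<forall>j<n. c j < n" using n by (simp add: c_def)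
    ultimately show ?thesis using n
      by (intro CollectI exI[of _ n] exI[of _ c]) auto
  qed
  have ub: "x \<le> ?L" if "x \<in> ?S" for x
  proof -
    obtain k c where kc: "x = ?f k c" "1 \<le> k" "k \<le> n" "\<forall>j<k. c j < n" using \<open>x \<in> ?S\<close> by blast
    have fac: "0 \<le> circ n a (c j) (c (Suc j mod k)) \<and> circ n a (c j) (c (Suc j mod k)) \<le> ?L" for j
      using nn aL n by (auto simp: circ_def nna_def)
    have "(\<Prod>j<k. circ n a (c j) (c (Suc j mod k))) \<le> (\<Prod>j<k. ?L)"
      using fac by (intro prod_mono) auto
    then have "x \<le> root k (?L ^ k)" using kc by (simp add: real_root_le_mono)
    then show ?thesis using kc L0 by (simp add: real_root_power_cancel)
  qed
  show ?thesis unfolding mx_lambda_def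
    by (rule Max_eqI[OF fin]) (use ub mem in auto)
qed

lemma lip:
  assumes n: "1 \<le> n" and M: "nnm n M" and d: "\<forall>k<n. \<bar>y k - x k\<bar> \<le> \<delta>"
  shows "\<bar>mx_vec n M y i - mx_vec n M x i\<bar> \<le> Max ((\<lambda>k. M i k) ` {0..<n}) * \<delta>"
proof -
  let ?R = "Max ((\<lambda>k. M i k) ` {0..<n})"
  have d0: "0 \<le> \<delta>" using d n by (meson abs_ge_zero order_trans less_le_trans zero_less_one)
  have one: "mx_vec n M y i \<le> mx_vec n M x i + ?R * \<delta>" if "\<forall>k<n. \<bar>y k - x k\<bar> \<le> \<delta>" for x y
  proof -
    have "M i k * y k \<le> mx_vec n M x i + ?R * \<delta>" if k: "k < n" for k
    proof -
      have Mk: "0 \<le> M i k" "M i k \<le> ?R" using M k by (auto simp: nnm_def)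
      have "M i k * y k \<le> M i k * (x k + \<delta>)"
        using \<open>\<forall>k<n. \<bar>y k - x k\<bar> \<le> \<delta>\<close> k Mk by (intro mult_left_mono) auto
      also have "\<dots> = M i k * x k + M i k * \<delta>" by (simp add: algebra_simps)
      also have "\<dots> \<le> mx_vec n M x i + ?R * \<delta>"
        using k Mk d0 unfolding mx_vec_def by (intro add_mono Max_ge mult_right_mono) auto
      finally show ?thesis .
    qed
    then show ?thesis unfolding mx_vec_def[of n M y] using n by (simp add: Max_le_iff)
  qed
  have "mx_vec n M y i \<le> mx_vec n M x i + ?R * \<delta>" using one d by blast
  moreover have "mx_vec n M x i \<le> mx_vec n M y i + ?R * \<delta>" using one[of x y] d by (simp add: abs_minus_commute)
  ultimately show ?thesis by (simp add: abs_le_iff)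
qed

lemma eps_zero:
  fixes e C :: real
  assumes "0 \<le> C" "\<forall>\<delta>>0. \<bar>e\<bar> \<le> C * \<delta>"
  shows "e = 0"
proof (rule ccontr)
  assume "e \<noteq> 0"
  then have p: "0 < \<bar>e\<bar> / (C + 1)" using assms by simp
  have "\<bar>e\<bar> \<le> C * (\<bar>e\<bar> / (C + 1))" using assms p by blast
  also have "\<dots> < \<bar>e\<bar>" using assms \<open>e \<noteq> 0\<close> by (simp add: field_simps)
  finally show False by simp
qed

lemma ivl_bounds: "v \<in> ivl lo hi cl cr \<Longrightarrow> lo \<le> v \<and> v \<le> hi"
  by (auto simp: ivl_def split: if_splits)

lemma approx_lo:
  assumes "ivl_ok lo hi cl cr" "0 < \<delta>"
  shows "\<exists>v \<in> ivl lo hi cl cr. \<bar>v - lo\<bar> \<le> \<delta>"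
proof (cases "lo = hi")
  case True
  obtain v where "v \<in> ivl lo hi cl cr" using assms by (auto simp: ivl_ok_def)
  then show ?thesis using True ivl_bounds[of v lo hi cl cr] assms by force
next
  case False
  then have "lo < hi" using assms by (simp add: ivl_ok_def)
  define v where "v = lo + min \<delta> ((hi - lo) / 2)"
  have "min \<delta> ((hi - lo) / 2) \<le> (hi - lo) / 2" "min \<delta> ((hi - lo) / 2) \<le> \<delta>"
    by (rule min.cobounded2, rule min.cobounded1)
  moreover have "0 < min \<delta> ((hi - lo) / 2)" using \<open>lo < hi\<close> assms by simp
  ultimately have "lo < v" "v < hi" "\<bar>v - lo\<bar> \<le> \<delta>" unfolding v_def using \<open>lo < hi\<close> by (auto simp: abs_of_pos)
  then show ?thesis by (intro bexI[of _ v]) (auto simp: ivl_def)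
qed

lemma approx_hi:
  assumes "ivl_ok lo hi cl cr" "0 < \<delta>"
  shows "\<exists>v \<in> ivl lo hi cl cr. \<bar>v - hi\<bar> \<le> \<delta>"
proof (cases "lo = hi")
  case True
  obtain v where "v \<in> ivl lo hi cl cr" using assms by (auto simp: ivl_ok_def)
  then show ?thesis using True ivl_bounds[of v lo hi cl cr] assms by force
next
  case False
  then have "lo < hi" using assms by (simp add: ivl_ok_def)
  define v where "v = hi - min \<delta> ((hi - lo) / 2)"
  have "min \<delta> ((hi - lo) / 2) \<le> (hi - lo) / 2" "min \<delta> ((hi - lo) / 2) \<le> \<delta>"
    by (rule min.cobounded2, rule min.cobounded1)
  moreover have "0 < min \<delta> ((hi - lo) / 2)" using \<open>lo < hi\<close> assms by simp
  ultimately have "lo < v" "v < hi" "\<bar>v - hi\<bar> \<le> \<delta>" unfolding v_def using \<open>lo < hi\<close> by (auto simp: abs_of_pos)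
  then show ?thesis by (intro bexI[of _ v]) (auto simp: ivl_def)
qed

lemma mlin:
  assumes n: "1 \<le> n" and M: "nnm n M" and c: "\<forall>j<n. 0 \<le> c j" and v: "\<forall>j<n. \<forall>k<n. 0 \<le> v j k"
  shows "mx_vec n M (\<lambda>k. Max ((\<lambda>j. c j * v j k) ` {0..<n})) i = Max ((\<lambda>j. c j * mx_vec n M (v j) i) ` {0..<n})"
proof -
  have "mx_vec n M (\<lambda>k. Max ((\<lambda>j. c j * v j k) ` {0..<n})) i
      = Max ((\<lambda>k. Max ((\<lambda>j. M i k * (c j * v j k)) ` {0..<n})) ` {0..<n})"
    unfolding mx_vec_def using n M
    by (intro arg_cong[where f=Max] image_cong refl, subst Max_mult_left) (auto simp: image_image nnm_def)
  also have "\<dots> = Max ((\<lambda>j. Max ((\<lambda>k. M i k * (c j * v j k)) ` {0..<n})) ` {0..<n})"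
    using n by (intro Max_swap) auto
  also have "\<dots> = Max ((\<lambda>j. c j * mx_vec n M (v j) i) ` {0..<n})"
    unfolding mx_vec_def using n c
    by (intro arg_cong[where f=Max] image_cong refl, subst Max_mult_left) (auto simp: image_image mult.left_commute)
  finally show ?thesis .
qed

lemma zero_attr:
  assumes n: "1 \<le> n" and z: "\<forall>t<n. a t = 0" and x: "x \<in> nonneg_vec n"
  shows "x \<in> Attr n (circ n a)"
proof -
  have nn: "nna n a" using z by (simp add: nna_def)
  have lam: "mx_lambda n (circ n a) = 0"
  proof -
    have "(0::nat) \<in> {0..<n}" using n by simp
    then have "a ` {0..<n} = {0}" using z by force
    then show ?thesis using lam_circ[OF n nn] by simp
  qed
  have x0: "\<forall>k<n. 0 \<le> x k" using x by (simp add: nonneg_vec_def)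
  have "V n a (Suc 0) x i = 0" for i
  proof -
    have "V n a (Suc 0) x i = mx_vec n (circ n a) (V n a 0 x) i" by (rule V_Suc_c[OF n nn x0])
    also have "\<dots> = Max ((\<lambda>k. 0) ` {0..<n})" unfolding op_circ using z n
      by (intro arg_cong[where f=Max] image_cong refl) auto
    also have "\<dots> = 0"
    proof -
      have "(0::nat) \<in> {0..<n}" using n by simp
      then have "(\<lambda>k::nat. 0::real) ` {0..<n} = {0}" by blast
      then show ?thesis by simp
    qed
    finally show ?thesis .
  qed
  then show ?thesis unfolding Attr_def using x lam by (intro CollectI conjI exI[of _ 0]) auto
qed



lemma attr_iff:
  assumes "1 \<le> n" "nna n a"
  shows "x \<in> Attr n (circ n a) \<longleftrightarrow> x \<in> nonneg_vec n \<and> (\<exists>t. holds n a (Max (a ` {0..<n})) t x)"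
  unfolding Attr_def holds_def lam_circ[OF assms] by simp

theorem theorem4:
  fixes n :: nat and xlo xhi alo ahi :: "nat \<Rightarrow> real" and xcl xcr acl acr :: "nat \<Rightarrow> bool"
  assumes "1 \<le> n"
    and "\<forall>i<n. ivl_ok (xlo i) (xhi i) (xcl i) (xcr i)"
    and "\<forall>t<n. ivl_ok (alo t) (ahi t) (acl t) (acr t)"
    and "hatA n alo ahi \<in> IC n alo ahi acl acr"
  shows "(\<exists>A \<in> IC n alo ahi acl acr. \<forall>x \<in> box n xlo xhi xcl xcr. x \<in> Attr n A)
     \<longleftrightarrow> (\<forall>i<n. xk xlo xhi i \<in> Attr n (hatA n alo ahi))"
proof -
  have n: "1 \<le> n" using assms(1) .
  let ?N = "n - 1"
  define \<alpha> where "\<alpha> = Max (alo ` {0..<n})"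
  define bh where "bh i = min \<alpha> (ahi i)" for i
  have hat: "hatA n alo ahi = circ n bh" unfolding hatA_def \<alpha>_def by (rule arg_cong[where f="circ n"]) (simp add: fun_eq_iff bh_def \<alpha>_def)
  have alo0: "0 \<le> alo t" "alo t \<le> ahi t" if "t < n" for t
    using assms(3) that by (auto simp: ivl_ok_def)
  have ahi0: "0 \<le> ahi t" if "t < n" for t using alo0[OF that] by linarith
  have xlo0: "0 \<le> xlo t" "xlo t \<le> xhi t" if "t < n" for t
    using assms(2) that by (auto simp: ivl_ok_def)
  have "\<alpha> \<in> alo ` {0..<n}" unfolding \<alpha>_def using n by (intro Max_in) auto
  then obtain j0 where j0: "j0 < n" "alo j0 = \<alpha>" by auto
  have \<alpha>ge: "alo t \<le> \<alpha>" if "t < n" for t unfolding \<alpha>_def using that by (intro Max_ge) auto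
  have \<alpha>0: "0 \<le> \<alpha>" using alo0 j0 by force
  have nnb: "nna n bh" using alo0 \<alpha>0 by (auto simp: nna_def bh_def intro: order_trans)
  have bhle: "\<forall>t<n. bh t \<le> \<alpha>" by (simp add: bh_def)
  have bhj0: "bh j0 = \<alpha>" using j0 alo0(2)[OF j0(1)] by (simp add: bh_def)
  have Mb: "Max (bh ` {0..<n}) = \<alpha>"
    using bhle bhj0 j0 by (intro Max_eqI) auto
  have xk0: "xk xlo xhi i \<in> nonneg_vec n" for i
    using xlo0 by (force simp: nonneg_vec_def xk_def)
  have box0: "x \<in> nonneg_vec n" if "x \<in> box n xlo xhi xcl xcr" for x
    using that xlo0 ivl_bounds by (force simp: box_def nonneg_vec_def)
  have zcase: "z \<in> Attr n (hatA n alo ahi)" if "\<alpha> = 0" "z \<in> nonneg_vec n" for z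
  proof -
    have "\<forall>t<n. bh t = 0" using that(1) ahi0 by (auto simp: bh_def)
    then show ?thesis unfolding hat using zero_attr[OF n _ that(2)] by blast
  qed
  show ?thesis
  proof
    assume "\<exists>A \<in> IC n alo ahi acl acr. \<forall>x \<in> box n xlo xhi xcl xcr. x \<in> Attr n A"
    then obtain a where a: "\<forall>t<n. a t \<in> ivl (alo t) (ahi t) (acl t) (acr t)"
      and att: "\<forall>x \<in> box n xlo xhi xcl xcr. x \<in> Attr n (circ n a)"
      unfolding IC_def by blast
    show "\<forall>i<n. xk xlo xhi i \<in> Attr n (hatA n alo ahi)"
    proof (intro allI impI)
      fix i assume i: "i < n"
      show "xk xlo xhi i \<in> Attr n (hatA n alo ahi)"
      proof (cases "\<alpha> = 0")
        case True then show ?thesis using zcase xk0 by blast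
      next
        case False
        then have \<alpha>pos: "0 < \<alpha>" using \<alpha>0 by simp
        have ab: "alo t \<le> a t" "a t \<le> ahi t" if "t < n" for t using a that ivl_bounds by blast+
        have nna: "nna n a" using ab alo0 by (force simp: nna_def)
        define La where "La = Max (a ` {0..<n})"
        have "La \<in> a ` {0..<n}" unfolding La_def using n by (intro Max_in) auto
        then obtain k0 where k0: "k0 < n" "a k0 = La" by auto
        have Lage: "a t \<le> La" if "t < n" for t unfolding La_def using that by (intro Max_ge) auto
        have La\<alpha>: "\<alpha> \<le> La" using Lage[OF j0(1)] ab[OF j0(1)] j0 by simp
        have ga: "gen n a La k0" using nna Lage k0 by (simp add: gen_def)
        have bk0: "bh k0 = \<alpha>" using ab[OF k0(1)] k0 La\<alpha> by (simp add: bh_def)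
        have gb: "gen n bh \<alpha> k0" using nnb bhle k0 bk0 by (simp add: gen_def)
        have cmp: "\<forall>t<n. \<alpha> * a t \<le> La * bh t"
        proof (intro allI impI)
          fix t assume t: "t < n"
          show "\<alpha> * a t \<le> La * bh t"
          proof (cases "\<alpha> \<le> ahi t")
            case True
            then have "bh t = \<alpha>" by (simp add: bh_def)
            then show ?thesis using mult_left_mono[OF Lage[OF t] \<alpha>0] by (simp add: mult.commute)
          next
            case False
            then have "bh t = ahi t" by (simp add: bh_def)
            moreover have "\<alpha> * a t \<le> \<alpha> * ahi t" using ab[OF t] \<alpha>0 by (simp add: mult_left_mono)
            moreover have "\<alpha> * ahi t \<le> La * ahi t" using La\<alpha> ab[OF t] alo0[OF t] by (intro mult_right_mono) auto
            ultimately show ?thesis by simp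
          qed
        qed
        have hb: "holds n bh \<alpha> ?N y" if y: "y \<in> box n xlo xhi xcl xcr" for y
        proof -
          have "y \<in> Attr n (circ n a)" using att y by blast
          then obtain t where "holds n a La t y" and yn: "y \<in> nonneg_vec n"
            using attr_iff[OF n nna] unfolding La_def by blast
          then show ?thesis
            using Transfer[OF n ga gb cmp _ _ \<alpha>pos] yn La\<alpha> \<alpha>pos by (auto simp: nonneg_vec_def)
        qed
        let ?x = "xk xlo xhi i"
        have x0: "\<forall>k<n. 0 \<le> ?x k" using xk0 by (simp add: nonneg_vec_def)
        have "holds n bh \<alpha> ?N ?x" unfolding holds_def
        proof (intro allI impI)
          fix j assume j: "j < n"
          let ?M1 = "mx_pow n (circ n bh) (Suc ?N)"
          let ?M2 = "mx_pow n (circ n bh) ?N"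
          let ?R1 = "Max ((\<lambda>k. ?M1 j k) ` {0..<n})"
          let ?R2 = "Max ((\<lambda>k. ?M2 j k) ` {0..<n})"
          have M1: "nnm n ?M1" and M2: "nnm n ?M2" by (rule nnm_pow[OF n nnm_circ[OF n nnb]])+
          have R0: "0 \<le> ?R1" "0 \<le> ?R2"
          proof -
            have "0 \<le> ?M1 j 0" "0 \<le> ?M2 j 0" using M1 M2 n by (auto simp: nnm_def)
            moreover have "?M1 j 0 \<le> ?R1" "?M2 j 0 \<le> ?R2" using n by (auto intro: Max_ge)
            ultimately show "0 \<le> ?R1" "0 \<le> ?R2" by linarith+
          qed
          let ?e = "mx_vec n ?M1 ?x j - \<alpha> * mx_vec n ?M2 ?x j"
          have "?e = 0"
          proof (rule eps_zero[of "?R1 + \<alpha> * ?R2"])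
            show "0 \<le> ?R1 + \<alpha> * ?R2" using R0 \<alpha>0 by simp
            show "\<forall>\<delta>>0. \<bar>?e\<bar> \<le> (?R1 + \<alpha> * ?R2) * \<delta>"
            proof (intro allI impI)
              fix \<delta> :: real assume d: "0 < \<delta>"
              have "\<forall>k. \<exists>v. k < n \<longrightarrow> v \<in> ivl (xlo k) (xhi k) (xcl k) (xcr k) \<and> \<bar>v - ?x k\<bar> \<le> \<delta>"
              proof
                fix k show "\<exists>v. k < n \<longrightarrow> v \<in> ivl (xlo k) (xhi k) (xcl k) (xcr k) \<and> \<bar>v - ?x k\<bar> \<le> \<delta>"
                proof (cases "k < n")
                  case True
                  then show ?thesis
                    using approx_lo[OF assms(2)[rule_format, OF True] d] approx_hi[OF assms(2)[rule_format, OF True] d]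
                    by (cases "k = i") (auto simp: xk_def)
                qed simp
              qed
              then obtain y where y: "\<forall>k<n. y k \<in> ivl (xlo k) (xhi k) (xcl k) (xcr k) \<and> \<bar>y k - ?x k\<bar> \<le> \<delta>"
                by metis
              then have yb: "y \<in> box n xlo xhi xcl xcr" by (simp add: box_def)
              have hy: "mx_vec n ?M1 y j = \<alpha> * mx_vec n ?M2 y j"
                using hb[OF yb] j by (simp add: holds_def)
              have l1: "\<bar>mx_vec n ?M1 ?x j - mx_vec n ?M1 y j\<bar> \<le> ?R1 * \<delta>"
                using lip[OF n M1, of ?x y \<delta> j] y by (simp add: abs_minus_commute)
              have l2: "\<bar>mx_vec n ?M2 y j - mx_vec n ?M2 ?x j\<bar> \<le> ?R2 * \<delta>"
                using lip[OF n M2, of y ?x \<delta> j] y by simp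
              let ?p = "mx_vec n ?M1 ?x j - mx_vec n ?M1 y j"
              let ?q = "mx_vec n ?M2 y j - mx_vec n ?M2 ?x j"
              have eq: "?e = ?p + \<alpha> * ?q"
                using hy by (simp add: algebra_simps)
              have "\<bar>?p + \<alpha> * ?q\<bar> \<le> \<bar>?p\<bar> + \<bar>\<alpha> * ?q\<bar>" by (rule abs_triangle_ineq)
              also have "\<bar>\<alpha> * ?q\<bar> = \<alpha> * \<bar>?q\<bar>" using \<alpha>0 by (simp add: abs_mult)
              finally have "\<bar>?p + \<alpha> * ?q\<bar> \<le> \<bar>?p\<bar> + \<alpha> * \<bar>?q\<bar>" .
              then have "\<bar>?e\<bar> \<le> \<bar>?p\<bar> + \<alpha> * \<bar>?q\<bar>" using eq by (simp only:)
              also have "\<dots> \<le> ?R1 * \<delta> + \<alpha> * (?R2 * \<delta>)"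
                using l1 l2 \<alpha>0 by (intro add_mono mult_left_mono) auto
              finally show "\<bar>?e\<bar> \<le> (?R1 + \<alpha> * ?R2) * \<delta>" by (simp add: algebra_simps)
            qed
          qed
          then show "V n bh (Suc ?N) ?x j = \<alpha> * V n bh ?N ?x j" by simp
        qed
        then show ?thesis unfolding hat using attr_iff[OF n nnb] Mb xk0 by blast
      qed
    qed
  next
    assume R: "\<forall>i<n. xk xlo xhi i \<in> Attr n (hatA n alo ahi)"
    show "\<exists>A \<in> IC n alo ahi acl acr. \<forall>x \<in> box n xlo xhi xcl xcr. x \<in> Attr n A"
    proof (rule bexI[OF _ assms(4)], intro ballI)
      fix x assume x: "x \<in> box n xlo xhi xcl xcr"
      show "x \<in> Attr n (hatA n alo ahi)"
      proof (cases "\<alpha> = 0")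
        case True then show ?thesis using zcase box0 x by blast
      next
        case False
        then have \<alpha>pos: "0 < \<alpha>" using \<alpha>0 by simp
        have gb: "gen n bh \<alpha> j0" using nnb bhle j0 bhj0 by (simp add: gen_def)
        have hj: "holds n bh \<alpha> ?N (xk xlo xhi j)" if "j < n" for j
        proof -
          have "xk xlo xhi j \<in> Attr n (circ n bh)" using R that hat by simp
          then have "\<exists>t. holds n bh \<alpha> t (xk xlo xhi j)" using attr_iff[OF n nnb] Mb by simp
          then obtain t where "holds n bh \<alpha> t (xk xlo xhi j)" by blast
          then show ?thesis using FIX[OF n gb _ \<alpha>pos] xk0[of j] by (simp add: nonneg_vec_def)
        qed
        have xb: "xlo k \<le> x k" "x k \<le> xhi k" if "k < n" for k
          using x that ivl_bounds by (force simp: box_def)+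
        define c where "c j = (if 0 < xhi j then x j / xhi j else 0)" for j
        have c01: "0 \<le> c j" "c j \<le> 1" if "j < n" for j
          using xb[OF that] xlo0[OF that] by (auto simp: c_def divide_le_eq_1)
        have dec: "x k = Max ((\<lambda>j. c j * xk xlo xhi j k) ` {0..<n})" if k: "k < n" for k
        proof (rule sym, rule Max_eqI)
          show "finite ((\<lambda>j. c j * xk xlo xhi j k) ` {0..<n})" by simp
          have ck: "c k * xhi k = x k"
            using xb[OF k] xlo0[OF k] by (auto simp: c_def)
          show "x k \<in> (\<lambda>j. c j * xk xlo xhi j k) ` {0..<n}"
            using k ck by (intro image_eqI[of _ _ k]) (auto simp: xk_def)
          fix z assume "z \<in> (\<lambda>j. c j * xk xlo xhi j k) ` {0..<n}"
          then obtain j where j: "j < n" "z = c j * xk xlo xhi j k" by auto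
          show "z \<le> x k"
          proof (cases "j = k")
            case True then show ?thesis using j ck by (simp add: xk_def)
          next
            case False
            then have "z = c j * xlo k" using j by (simp add: xk_def)
            also have "\<dots> \<le> 1 * xlo k" using c01[OF j(1)] xlo0[OF k] by (intro mult_right_mono) auto
            also have "\<dots> \<le> x k" using xb[OF k] by simp
            finally show ?thesis .
          qed
        qed
        have vpos: "\<forall>j<n. \<forall>k<n. 0 \<le> xk xlo xhi j k" using xk0 by (simp add: nonneg_vec_def)
        have c0: "\<forall>j<n. 0 \<le> c j" using c01 by simp
        have Mp: "nnm n (mx_pow n (circ n bh) m)" for m using nnm_pow[OF n nnm_circ[OF n nnb]] .
        have lin: "V n bh m x i = Max ((\<lambda>j. c j * V n bh m (xk xlo xhi j) i) ` {0..<n})" for m i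
        proof -
          have "V n bh m x i = mx_vec n (mx_pow n (circ n bh) m) (\<lambda>k. Max ((\<lambda>j. c j * xk xlo xhi j k) ` {0..<n})) i"
            using dec by (intro mx_vec_cong) auto
          also have "\<dots> = Max ((\<lambda>j. c j * V n bh m (xk xlo xhi j) i) ` {0..<n})"
            by (rule mlin[OF n Mp c0 vpos])
          finally show ?thesis .
        qed
        have "holds n bh \<alpha> ?N x" unfolding holds_def
        proof (intro allI impI)
          fix i assume i: "i < n"
          have "V n bh (Suc ?N) x i = Max ((\<lambda>j. c j * V n bh (Suc ?N) (xk xlo xhi j) i) ` {0..<n})"
            by (rule lin)
          also have "\<dots> = Max ((\<lambda>j. \<alpha> * (c j * V n bh ?N (xk xlo xhi j) i)) ` {0..<n})"
            using hj i by (intro arg_cong[where f=Max] image_cong refl) (auto simp: holds_def)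
          also have "\<dots> = \<alpha> * Max ((\<lambda>j. c j * V n bh ?N (xk xlo xhi j) i) ` {0..<n})"
            using n \<alpha>0 by (subst Max_mult_left) (auto simp: image_image)
          also have "\<dots> = \<alpha> * V n bh ?N x i" using lin by simp
          finally show "V n bh (Suc ?N) x i = \<alpha> * V n bh ?N x i" .
        qed
        then show ?thesis unfolding hat using attr_iff[OF n nnb] Mb box0[OF x] by blast
      qed
    qed
  qed
qed



end
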